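(* Let $M(C,\bar\xi,\pi)$ be a Myller configuration whose versor field has Frenet-type frame $(\bar\xi_1,\bar\xi_2,\bar\xi_3)$ with curvature $K_1>0$. Then $C$ is a $\bar\xi_1$-helix with respect to the Frenet-type frame if and only if $C$ is a $W_n$-helix in $M$.
   Context: Let $C$ be a smooth curve in $E^3$ parametrized by arclength $s$; primes denote $d/ds$. A Myller configuration $M(C,\bar\xi,\pi)$ consists of a smooth unit vector field $\bar\xi$ along $C$ and a smooth oriented plane field $\pi$ with $\bar\xi\in\pi$; $\bar v$ is the unit normal of $\pi$, $\bar\mu=\bar v\times\bar\xi$, and $\bar\xi'=G\bar\mu+K\bar v$, $\bar\mu'=-G\bar\xi+T\bar v$, $\bar v'=-K\bar\xi-T\bar\mu$. Frenet-type frame: $\bar\xi_1=\bar\xi$, $K_1=\|\bar\xi'\|$, $\bar\xi_2=\bar\xi_1'/K_1$, $\bar\xi_3=\bar\xi_1\times\bar\xi_2$. $C$ is a $\bar\xi_1$-helix if $\langle\bar\xi_1,\bar d\rangle$ is constant for some constant unit vector $\bar d$. The ND-vector is $W_n=-K\bar\mu+G\bar v$, $\bar W_n=W_n/\|W_n\|$ ($\|W_n\|=\sqrt{G^2+K^2}=K_1$), and $C$ is a $W_n$-helix if $\langle\bar W_n,\bar l_n\rangle$ is constant for some constant unit vector $\bar l_n$. *)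

theory Defs
  imports "HOL-Analysis.Analysis"
begin

definition smooth_on :: "real set \<Rightarrow> (real \<Rightarrow> real^3) \<Rightarrow> bool" where
  "smooth_on I f \<longleftrightarrow> (\<exists>D :: nat \<Rightarrow> real \<Rightarrow> real^3.
      (\<forall>s\<in>I. D 0 s = f s) \<and>
      (\<forall>n. \<forall>s\<in>I. (D n has_vector_derivative D (Suc n) s) (at s)))"

text \<open>Myller configuration M(C, xi, pi) on the open parameter interval I.
  r parametrizes C by arclength, xi is the unit versor field, the oriented plane
  field pi is given by its unit normal v (xi in pi means xi orthogonal to v),
  mu = v \<times> xi, and G, K, T are the invariants in the derivative formulas.\<close>
definition myller_mu :: "(real \<Rightarrow> real^3) \<Rightarrow> (real \<Rightarrow> real^3) \<Rightarrow> real \<Rightarrow> real^3" where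
  "myller_mu xi v s = cross3 (v s) (xi s)"

definition myller_configuration ::
  "real set \<Rightarrow> (real \<Rightarrow> real^3) \<Rightarrow> (real \<Rightarrow> real^3) \<Rightarrow> (real \<Rightarrow> real^3)
    \<Rightarrow> (real \<Rightarrow> real) \<Rightarrow> (real \<Rightarrow> real) \<Rightarrow> (real \<Rightarrow> real) \<Rightarrow> bool" where
  "myller_configuration I r xi v G K T \<longleftrightarrow>
     is_interval I \<and> open I \<and> I \<noteq> {} \<and>
     smooth_on I r \<and> smooth_on I xi \<and> smooth_on I v \<and>
     (\<forall>s\<in>I. norm (vector_derivative r (at s)) = 1) \<and>
     (\<forall>s\<in>I. norm (xi s) = 1 \<and> norm (v s) = 1 \<and> xi s \<bullet> v s = 0) \<and>
     (\<forall>s\<in>I. (xi has_vector_derivative (G s *\<^sub>R myller_mu xi v s + K s *\<^sub>R v s)) (at s)) \<and>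
     (\<forall>s\<in>I. (myller_mu xi v has_vector_derivative (- G s *\<^sub>R xi s + T s *\<^sub>R v s)) (at s)) \<and>
     (\<forall>s\<in>I. (v has_vector_derivative (- K s *\<^sub>R xi s - T s *\<^sub>R myller_mu xi v s)) (at s))"

definition frenet_xi1 :: "(real \<Rightarrow> real^3) \<Rightarrow> real \<Rightarrow> real^3" where
  "frenet_xi1 xi s = xi s"

definition frenet_K1 :: "(real \<Rightarrow> real^3) \<Rightarrow> real \<Rightarrow> real" where
  "frenet_K1 xi s = norm (vector_derivative xi (at s))"

definition frenet_xi2 :: "(real \<Rightarrow> real^3) \<Rightarrow> real \<Rightarrow> real^3" where
  "frenet_xi2 xi s = (1 / frenet_K1 xi s) *\<^sub>R vector_derivative (frenet_xi1 xi) (at s)"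

definition frenet_xi3 :: "(real \<Rightarrow> real^3) \<Rightarrow> real \<Rightarrow> real^3" where
  "frenet_xi3 xi s = cross3 (frenet_xi1 xi s) (frenet_xi2 xi s)"

definition xi1_helix :: "real set \<Rightarrow> (real \<Rightarrow> real^3) \<Rightarrow> bool" where
  "xi1_helix I xi \<longleftrightarrow>
     (\<exists>d :: real^3. norm d = 1 \<and> (\<exists>c. \<forall>s\<in>I. frenet_xi1 xi s \<bullet> d = c))"

definition W_n :: "(real \<Rightarrow> real^3) \<Rightarrow> (real \<Rightarrow> real^3) \<Rightarrow> (real \<Rightarrow> real) \<Rightarrow> (real \<Rightarrow> real)
    \<Rightarrow> real \<Rightarrow> real^3" where
  "W_n xi v G K s = - K s *\<^sub>R myller_mu xi v s + G s *\<^sub>R v s"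

definition W_n_unit :: "(real \<Rightarrow> real^3) \<Rightarrow> (real \<Rightarrow> real^3) \<Rightarrow> (real \<Rightarrow> real) \<Rightarrow> (real \<Rightarrow> real)
    \<Rightarrow> real \<Rightarrow> real^3" where
  "W_n_unit xi v G K s = (1 / norm (W_n xi v G K s)) *\<^sub>R W_n xi v G K s"

definition Wn_helix :: "real set \<Rightarrow> (real \<Rightarrow> real^3) \<Rightarrow> (real \<Rightarrow> real^3)
    \<Rightarrow> (real \<Rightarrow> real) \<Rightarrow> (real \<Rightarrow> real) \<Rightarrow> bool" where
  "Wn_helix I xi v G K \<longleftrightarrow>
     (\<exists>l :: real^3. norm l = 1 \<and> (\<exists>c. \<forall>s\<in>I. W_n_unit xi v G K s \<bullet> l = c))"

end

theory Submission
  imports Defs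
begin

lemma decomp:
  fixes a b w :: "real^3"
  assumes "a \<bullet> a = 1" "a \<bullet> b = 0"
  shows "(b \<bullet> b) *\<^sub>R w = ((w \<bullet> a)*(b \<bullet> b)) *\<^sub>R a + (w \<bullet> b) *\<^sub>R b + (w \<bullet> (cross3 a b)) *\<^sub>R (cross3 a b)"
  using assms unfolding cross3_def inner_vec_def sum_3 vec_eq_iff forall_3 vector_def
  by simp algebra

lemma ident2:
  fixes a b b2 w :: "real^3"
  assumes "a \<bullet> a = 1" "a \<bullet> b = 0"
  shows "(cross3 a b2 \<bullet> w) * (b \<bullet> b) - (cross3 a b \<bullet> w) * (b \<bullet> b2) = - (cross3 a b \<bullet> b2) * (b \<bullet> w)"
  using assms unfolding cross3_def inner_vec_def sum_3 vec_eq_iff forall_3 vector_def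
  by simp algebra

lemma bb_cross: "bounded_bilinear (cross3 :: real^3 \<Rightarrow> real^3 \<Rightarrow> real^3)"
  by (rule bilinear_conv_bounded_bilinear[THEN iffD1, OF bilinear_cross])

lemma inner_deriv:
  fixes f g :: "real \<Rightarrow> 'a::real_inner"
  assumes "(f has_vector_derivative f') (at x)" "(g has_vector_derivative g') (at x)"
  shows "((\<lambda>s. f s \<bullet> g s) has_field_derivative (f x \<bullet> g' + f' \<bullet> g x)) (at x)"
  using bounded_bilinear.has_vector_derivative[OF bounded_bilinear_inner assms]
  by (simp add: has_real_derivative_iff_has_vector_derivative)

lemma cross_deriv:
  fixes f g :: "real \<Rightarrow> real^3"
  assumes "(f has_vector_derivative f') (at x)" "(g has_vector_derivative g') (at x)"
  shows "((\<lambda>s. cross3 (f s) (g s)) has_vector_derivative (cross3 (f x) g' + cross3 f' (g x))) (at x)"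
  using bounded_bilinear.has_vector_derivative[OF bb_cross assms] by simp
lemma n_deriv:
  fixes a b :: "real \<Rightarrow> real^3"
  assumes da: "(a has_vector_derivative b x) (at x)" and db: "(b has_vector_derivative B) (at x)"
    and aa: "a x \<bullet> a x = 1" and ab: "a x \<bullet> b x = 0" and bnz: "b x \<noteq> 0"
  shows "((\<lambda>s. ((1 / norm (b s)) *\<^sub>R cross3 (a s) (b s)) \<bullet> w) has_field_derivative
           (- (cross3 (a x) (b x) \<bullet> B) * (b x \<bullet> w) / norm (b x) ^ 3)) (at x)"
proof -
  have eq: "(\<lambda>s. ((1 / norm (b s)) *\<^sub>R cross3 (a s) (b s)) \<bullet> w) = (\<lambda>s. (cross3 (a s) (b s) \<bullet> w) / sqrt (b s \<bullet> b s))"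
    by (auto simp: norm_eq_sqrt_inner)
  have h: "((\<lambda>s. cross3 (a s) (b s) \<bullet> w) has_field_derivative (cross3 (a x) B \<bullet> w)) (at x)"
    using inner_deriv[OF cross_deriv[OF da db] has_vector_derivative_const[of w]] by simp
  have q: "((\<lambda>s. b s \<bullet> b s) has_field_derivative (2 * (b x \<bullet> B))) (at x)"
    using inner_deriv[OF db db] by (simp add: inner_commute)
  have pos: "b x \<bullet> b x > 0" using bnz by simp
  have sq: "((\<lambda>s. sqrt (b s \<bullet> b s)) has_field_derivative (inverse (sqrt (b x \<bullet> b x)) / 2 * (2 * (b x \<bullet> B)))) (at x)"
    using DERIV_chain2[OF DERIV_real_sqrt[OF pos] q] .
  have sne: "sqrt (b x \<bullet> b x) \<noteq> 0" using pos by simp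
  have D: "((\<lambda>s. (cross3 (a s) (b s) \<bullet> w) / sqrt (b s \<bullet> b s)) has_field_derivative
     ((cross3 (a x) B \<bullet> w) * sqrt (b x \<bullet> b x) - (cross3 (a x) (b x) \<bullet> w) * (inverse (sqrt (b x \<bullet> b x)) / 2 * (2 * (b x \<bullet> B)))) / (sqrt (b x \<bullet> b x) * sqrt (b x \<bullet> b x))) (at x)"
    by (rule DERIV_divide[OF h sq sne])
  have N: "norm (b x) = sqrt (b x \<bullet> b x)" by (simp add: norm_eq_sqrt_inner)
  have ss: "sqrt (b x \<bullet> b x) * sqrt (b x \<bullet> b x) = b x \<bullet> b x" using pos by simp
  have id: "(cross3 (a x) B \<bullet> w) * (b x \<bullet> b x) - (cross3 (a x) (b x) \<bullet> w) * (b x \<bullet> B) = - (cross3 (a x) (b x) \<bullet> B) * (b x \<bullet> w)"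
    by (rule ident2[OF aa ab])
  have "((cross3 (a x) B \<bullet> w) * sqrt (b x \<bullet> b x) - (cross3 (a x) (b x) \<bullet> w) * (inverse (sqrt (b x \<bullet> b x)) / 2 * (2 * (b x \<bullet> B)))) / (sqrt (b x \<bullet> b x) * sqrt (b x \<bullet> b x))
      = ((cross3 (a x) B \<bullet> w) * (b x \<bullet> b x) - (cross3 (a x) (b x) \<bullet> w) * (b x \<bullet> B)) / (sqrt (b x \<bullet> b x))^3"
    using sne ss by (simp add: field_simps power3_eq_cube)
  also have "\<dots> = - (cross3 (a x) (b x) \<bullet> B) * (b x \<bullet> w) / norm (b x) ^ 3" by (simp add: id N)
  finally show ?thesis using D eq by simp
qed
lemma locz:
  fixes g :: "real \<Rightarrow> real"
  assumes "(g has_field_derivative g') (at s)" "e > 0" "\<forall>u. dist u s < e \<longrightarrow> g u = g s"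
  shows "g' = 0"
  using DERIV_local_const[OF assms(1,2)] assms(3) by (metis dist_real_def abs_minus_commute)

lemma norm_cross_orth:
  fixes a b :: "real^3"
  assumes "a \<bullet> a = 1" "a \<bullet> b = 0"
  shows "norm (cross3 a b) = norm b"
proof -
  have "norm a = 1" using assms(1) by (simp add: norm_eq_sqrt_inner)
  then have "(norm (cross3 a b))^2 = (norm b)^2" using norm_cross_dot[of a b] assms(2) by simp
  then show ?thesis by (simp add: power2_eq_iff_nonneg)
qed

lemma core:
  fixes a b b2 :: "real \<Rightarrow> real^3" and I :: "real set"
  assumes iv: "is_interval I" and op: "open I" and ne: "I \<noteq> {}"
    and da: "\<And>s. s\<in>I \<Longrightarrow> (a has_vector_derivative b s) (at s)"
    and db: "\<And>s. s\<in>I \<Longrightarrow> (b has_vector_derivative b2 s) (at s)"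
    and cb2: "continuous_on I b2"
    and aa: "\<And>s. s\<in>I \<Longrightarrow> a s \<bullet> a s = 1"
    and ab: "\<And>s. s\<in>I \<Longrightarrow> a s \<bullet> b s = 0"
    and bnz: "\<And>s. s\<in>I \<Longrightarrow> b s \<noteq> 0"
  shows "(\<exists>d::real^3. norm d = 1 \<and> (\<exists>c. \<forall>s\<in>I. a s \<bullet> d = c)) \<longleftrightarrow>
         (\<exists>l::real^3. norm l = 1 \<and> (\<exists>c. \<forall>s\<in>I. ((1 / norm (b s)) *\<^sub>R cross3 (a s) (b s)) \<bullet> l = c))"
proof -
  define n where "n s = (1 / norm (b s)) *\<^sub>R cross3 (a s) (b s)" for s
  define \<sigma> where "\<sigma> s = cross3 (a s) (b s) \<bullet> b2 s" for s
  have nd: "((\<lambda>s. n s \<bullet> w) has_field_derivative (- \<sigma> s * (b s \<bullet> w) / norm (b s)^3)) (at s)"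
    if "s \<in> I" for s w
    unfolding n_def \<sigma>_def using n_deriv[OF da[OF that] db[OF that] aa[OF that] ab[OF that] bnz[OF that]] .
  have cvx: "convex I" using iv by (simp add: is_interval_convex_1)
  have constl: "\<exists>c. \<forall>s\<in>I. g s = c" if "\<And>s. s\<in>I \<Longrightarrow> (g has_field_derivative 0) (at s)" for g :: "real \<Rightarrow> real"
    using has_field_derivative_zero_constant[OF cvx] that has_field_derivative_at_within by blast
  have exball: "\<exists>e>0. \<forall>u. dist u s < e \<longrightarrow> u \<in> I" if "s \<in> I" for s
    using op that unfolding open_dist by blast
  have locI: "g' = 0" if sI: "s \<in> I" and gd: "(g has_field_derivative g') (at s)" and gc: "\<forall>u\<in>I. g u = g s" for g g' s
  proof -
    obtain e where e0: "e > 0" and eI: "\<forall>u. dist u s < e \<longrightarrow> u \<in> I" using exball[OF sI] by blast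
    have "\<forall>u. dist u s < e \<longrightarrow> g u = g s" using eI gc by blast
    then show ?thesis using locz[OF gd e0] by blast
  qed
  have normn: "norm (n s) = 1" if "s \<in> I" for s
    using norm_cross_orth[OF aa[OF that] ab[OF that]] bnz[OF that] by (simp add: n_def)
  have an: "a s \<bullet> n s = 0" for s by (simp add: n_def dot_cross_self)
  have ca: "continuous_on I a"
    using da by (meson continuous_at_imp_continuous_on has_vector_derivative_continuous)
  have cb: "continuous_on I b"
    using db by (meson continuous_at_imp_continuous_on has_vector_derivative_continuous)
  have cs: "continuous_on I \<sigma>" unfolding \<sigma>_def
    by (intro continuous_on_inner continuous_on_cross ca cb cb2)
  have ab2: "a s \<bullet> b2 s = - (b s \<bullet> b s)" if "s \<in> I" for s
  proof -
    have "a s \<bullet> b2 s + b s \<bullet> b s = 0"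
      using locI[OF that inner_deriv[OF da[OF that] db[OF that]]] ab that by simp
    then show ?thesis by simp
  qed
  have "(\<exists>d::real^3. norm d = 1 \<and> (\<exists>c. \<forall>s\<in>I. a s \<bullet> d = c)) \<longleftrightarrow>
         (\<exists>l::real^3. norm l = 1 \<and> (\<exists>c. \<forall>s\<in>I. n s \<bullet> l = c))"
  proof
    assume "\<exists>d::real^3. norm d = 1 \<and> (\<exists>c. \<forall>s\<in>I. a s \<bullet> d = c)"
    then obtain d c where d1: "norm d = 1" and dc: "\<forall>s\<in>I. a s \<bullet> d = c" by blast
    have bd: "b s \<bullet> d = 0" if "s \<in> I" for s
      using locI[OF that inner_deriv[OF da[OF that] has_vector_derivative_const[of d]]] dc that by simp
    have "\<exists>c. \<forall>s\<in>I. n s \<bullet> d = c"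
      proof (rule constl)
        fix s assume sI: "s \<in> I"
        show "((\<lambda>s. n s \<bullet> d) has_field_derivative 0) (at s)" using nd[OF sI, of d] bd[OF sI] by simp
      qed
    then show "\<exists>l::real^3. norm l = 1 \<and> (\<exists>c. \<forall>s\<in>I. n s \<bullet> l = c)" using d1 by blast
  next
    assume "\<exists>l::real^3. norm l = 1 \<and> (\<exists>c. \<forall>s\<in>I. n s \<bullet> l = c)"
    then obtain l c where l1: "norm l = 1" and lc: "\<forall>s\<in>I. n s \<bullet> l = c" by blast
    have sbl: "\<sigma> s * (b s \<bullet> l) = 0" if "s \<in> I" for s
    proof -
      have "- \<sigma> s * (b s \<bullet> l) / norm (b s)^3 = 0"
        using locI[OF that nd[OF that, of l]] lc that by simp
      then show ?thesis using bnz[OF that] by simp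
    qed
    obtain s0 where s0: "s0 \<in> I" using ne by blast
    show "\<exists>d::real^3. norm d = 1 \<and> (\<exists>c. \<forall>s\<in>I. a s \<bullet> d = c)"
    proof (cases "\<forall>s\<in>I. \<sigma> s = 0")
      case True
      have nc: "n s = n s0" if "s \<in> I" for s
      proof -
        define w where "w = n s - n s0"
        have "\<exists>c. \<forall>s\<in>I. n s \<bullet> w = c"
        proof (rule constl)
          fix s assume sI: "s \<in> I"
          show "((\<lambda>s. n s \<bullet> w) has_field_derivative 0) (at s)" using nd[OF sI, of w] True sI by simp
        qed
        then have "n s \<bullet> w = n s0 \<bullet> w" using that s0 by auto
        then have "w \<bullet> w = 0" by (simp add: w_def inner_diff_left)
        then show ?thesis by (simp add: w_def)
      qed
      have "\<forall>s\<in>I. a s \<bullet> n s0 = 0" using nc an by metis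
      then show ?thesis using normn[OF s0] by blast
    next
      case False
      then obtain s1 where s1: "s1 \<in> I" "\<sigma> s1 \<noteq> 0" by blast
      define f where "f s = a s \<bullet> l" for s
      have df: "(f has_field_derivative (b s \<bullet> l)) (at s)" if "s \<in> I" for s
        unfolding f_def using inner_deriv[OF da[OF that] has_vector_derivative_const[of l]] by simp
      have dg: "((\<lambda>s. b s \<bullet> l) has_field_derivative (b2 s \<bullet> l)) (at s)" if "s \<in> I" for s
        using inner_deriv[OF db[OF that] has_vector_derivative_const[of l]] by simp
      have key: "\<sigma> s * c = f s * norm (b s)^3 \<and> (f s)^2 + c^2 = 1"
        if "s \<in> I" "b s \<bullet> l = 0" "b2 s \<bullet> l = 0" for s
      proof -
        have N: "b s \<bullet> b s = (norm (b s))^2" by (simp add: power2_norm_eq_inner)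
        have Npos: "norm (b s) > 0" using bnz[OF that(1)] by simp
        have lx: "l \<bullet> cross3 (a s) (b s) = c * norm (b s)"
        proof -
          have "(1 / norm (b s)) * (cross3 (a s) (b s) \<bullet> l) = c" using lc that(1) by (simp add: n_def)
          then show ?thesis using Npos by (simp add: inner_commute field_simps)
        qed
        have dec: "(b s \<bullet> b s) *\<^sub>R l = ((l \<bullet> a s)*(b s \<bullet> b s)) *\<^sub>R a s + (l \<bullet> b s) *\<^sub>R b s + (l \<bullet> (cross3 (a s) (b s))) *\<^sub>R (cross3 (a s) (b s))"
          by (rule decomp[OF aa[OF that(1)] ab[OF that(1)]])
        have e1: "(b s \<bullet> b s) * (l \<bullet> b2 s) = ((l \<bullet> a s)*(b s \<bullet> b s)) * (a s \<bullet> b2 s) + (l \<bullet> b s) * (b s \<bullet> b2 s) + (l \<bullet> (cross3 (a s) (b s))) * \<sigma> s"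
          using arg_cong[OF dec, of "\<lambda>x. x \<bullet> b2 s"] by (simp add: inner_add_left \<sigma>_def)
        have e2: "(b s \<bullet> b s) * (l \<bullet> l) = ((l \<bullet> a s)*(b s \<bullet> b s)) * (a s \<bullet> l) + (l \<bullet> b s) * (b s \<bullet> l) + (l \<bullet> (cross3 (a s) (b s))) * (cross3 (a s) (b s) \<bullet> l)"
          using arg_cong[OF dec, of "\<lambda>x. x \<bullet> l"] by (simp add: inner_add_left)
        have ll: "l \<bullet> l = 1" using l1 by (simp add: norm_eq_sqrt_inner)
        have e1': "0 = - f s * (norm (b s))^4 + c * norm (b s) * \<sigma> s"
          using e1 that(2,3) ab2[OF that(1)] lx N
          by (simp add: inner_commute f_def power4_eq_xxxx power2_eq_square)
        have "\<sigma> s * c = f s * norm (b s)^3"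
        proof -
          have "norm (b s) * (\<sigma> s * c) = norm (b s) * (f s * norm (b s)^3)"
            using e1' by (simp add: algebra_simps power4_eq_xxxx power3_eq_cube) (metis mult.commute)
          then show ?thesis using Npos by simp
        qed
        moreover have "(f s)^2 + c^2 = 1"
        proof -
          have "(norm (b s))^2 * 1 = (norm (b s))^2 * ((f s)^2 + c^2)"
            using e2 that(2) ll lx N by (simp add: inner_commute f_def power2_eq_square algebra_simps)
          then show ?thesis using Npos by simp
        qed
        ultimately show ?thesis by blast
      qed
      have L: "\<exists>e>0. (\<forall>u. dist u s < e \<longrightarrow> u \<in> I \<and> f u = f s \<and> b u \<bullet> l = 0 \<and> b2 u \<bullet> l = 0
                 \<and> \<sigma> u * c = f s * norm (b u)^3)"
        if sI: "s \<in> I" and sn: "\<sigma> s \<noteq> 0" for s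
      proof -
        obtain e1 where e1: "e1 > 0" "\<forall>u. dist u s < e1 \<longrightarrow> u \<in> I" using exball[OF sI] by blast
        have "continuous (at s) \<sigma>" using cs op sI by (simp add: continuous_on_eq_continuous_at)
        then obtain e2 where e2: "e2 > 0" "\<forall>u. dist s u < e2 \<longrightarrow> \<sigma> u \<noteq> 0"
          using continuous_at_avoid[of s \<sigma> 0] sn by blast
        define e where "e = min e1 e2"
        have inI: "u \<in> I" if "dist u s < e" for u using that e1 by (simp add: e_def)
        have bl0: "b u \<bullet> l = 0" if "dist u s < e" for u
        proof -
          have "\<sigma> u \<noteq> 0" using e2 that by (simp add: e_def dist_commute)
          then show ?thesis using sbl[OF inI[OF that]] by simp
        qed
        have fc: "f u = f s" if "dist u s < e" for u
        proof -
          have "\<exists>c. \<forall>x\<in>ball s e. f x = c"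
          proof (rule has_field_derivative_zero_constant[OF convex_ball])
            fix x assume "x \<in> ball s e"
            then have xd: "dist x s < e" by (simp add: dist_commute)
            have "(f has_field_derivative 0) (at x)" using df[OF inI[OF xd]] bl0[OF xd] by simp
            then show "(f has_field_derivative 0) (at x within ball s e)" by (rule has_field_derivative_at_within)
          qed
          then obtain C where C: "\<forall>x\<in>ball s e. f x = C" by blast
          have "e > 0" using e1 e2 by (simp add: e_def)
          then have "s \<in> ball s e" "u \<in> ball s e" using that by (auto simp: dist_commute)
          then show ?thesis using C by simp
        qed
        have b20: "b2 u \<bullet> l = 0" if "dist u s < e" for u
        proof (rule locz[OF dg[OF inI[OF that]], of "e - dist u s"])
          show "e - dist u s > 0" using that by simp
          show "\<forall>v. dist v u < e - dist u s \<longrightarrow> b v \<bullet> l = b u \<bullet> l"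
          proof (intro allI impI)
            fix v assume "dist v u < e - dist u s"
            then have "dist v s < e" using dist_triangle[of v s u] by linarith
            then show "b v \<bullet> l = b u \<bullet> l" using bl0 that by simp
          qed
        qed
        show ?thesis
        proof (intro exI[of _ e] conjI allI impI)
          show "e > 0" using e1 e2 by (simp add: e_def)
        next
          fix u assume u: "dist u s < e"
          show "u \<in> I" "f u = f s" "b u \<bullet> l = 0" "b2 u \<bullet> l = 0" using inI bl0 fc b20 u by auto
          show "\<sigma> u * c = f s * norm (b u)^3" using key[OF inI[OF u] bl0[OF u] b20[OF u]] fc[OF u] by simp
        qed
      qed
      obtain e0 where "e0 > 0" and L0: "\<forall>u. dist u s1 < e0 \<longrightarrow> u \<in> I \<and> f u = f s1 \<and> b u \<bullet> l = 0 \<and> b2 u \<bullet> l = 0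
                 \<and> \<sigma> u * c = f s1 * norm (b u)^3" using L[OF s1] by blast
      have k1: "\<sigma> s1 * c = f s1 * norm (b s1)^3 \<and> (f s1)^2 + c^2 = 1"
      proof -
        have "dist s1 s1 < e0" using \<open>e0 > 0\<close> by simp
        then have "b s1 \<bullet> l = 0" "b2 s1 \<bullet> l = 0" using L0 by blast+
        then show ?thesis using key[OF s1(1)] by blast
      qed
      have Np1: "norm (b s1) > 0" using bnz[OF s1(1)] by simp
      have cnz: "c \<noteq> 0"
      proof
        assume "c = 0"
        then have "f s1 = 0" using k1 Np1 by simp
        then show False using k1 \<open>c = 0\<close> by simp
      qed
      have fnz: "f s1 \<noteq> 0" using k1 s1(2) cnz by auto
      define S where "S = {s\<in>I. (f s, \<sigma> s * c - f s1 * norm (b s)^3) = (f s1, 0)}"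
      have cf: "continuous_on I f" unfolding f_def by (intro continuous_on_inner ca continuous_on_const)
      have "closedin (top_of_set I) S" unfolding S_def
        by (intro continuous_closedin_preimage_constant continuous_on_Pair continuous_on_diff
            continuous_on_mult cf cs continuous_on_const continuous_on_power continuous_on_norm cb)
      moreover have "openin (top_of_set I) S"
      proof -
        have "open S" unfolding open_dist
        proof (intro ballI)
          fix x assume x: "x \<in> S"
          then have xI: "x \<in> I" and fx: "f x = f s1" and sx: "\<sigma> x * c = f s1 * norm (b x)^3"
            by (auto simp: S_def)
          have "\<sigma> x \<noteq> 0" using sx fnz bnz[OF xI] by auto
          then obtain e where "e > 0" and Le: "\<forall>u. dist u x < e \<longrightarrow> u \<in> I \<and> f u = f x \<and> b u \<bullet> l = 0 \<and> b2 u \<bullet> l = 0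
                 \<and> \<sigma> u * c = f x * norm (b u)^3" using L[OF xI] by blast
          show "\<exists>e>0. \<forall>y. dist y x < e \<longrightarrow> y \<in> S"
          proof (intro exI[of _ e] conjI allI impI)
            show "e > 0" by fact
            fix y assume "dist y x < e"
            then have "y \<in> I" "f y = f x" "\<sigma> y * c = f x * norm (b y)^3" using Le by blast+
            then show "y \<in> S" using fx by (simp add: S_def)
          qed
        qed
        then show ?thesis using op by (simp add: openin_open_eq S_def)
      qed
      moreover have "S \<noteq> {}"
      proof -
        have "s1 \<in> S" using s1 k1 by (simp add: S_def)
        then show ?thesis by blast
      qed
      ultimately have "S = I" using is_interval_connected[OF iv] by (meson connected_clopen)
      then have "\<forall>s\<in>I. a s \<bullet> l = f s1" by (auto simp: S_def f_def)
      then show ?thesis using l1 by blast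
    qed
  qed
  then show ?thesis by (simp add: n_def)
qed

lemma wn_ident:
  fixes x v :: "real^3" and g k :: real
  assumes "x \<bullet> x = 1" "x \<bullet> v = 0"
  shows "- k *\<^sub>R cross3 v x + g *\<^sub>R v = cross3 x (g *\<^sub>R cross3 v x + k *\<^sub>R v)"
  using assms unfolding cross3_def inner_vec_def sum_3 vec_eq_iff forall_3 vector_def
  by simp algebra

theorem corollary14:
  fixes I :: "real set" and r xi v :: "real \<Rightarrow> real^3" and G K T :: "real \<Rightarrow> real"
  assumes "myller_configuration I r xi v G K T"
    and "\<forall>s\<in>I. frenet_K1 xi s > 0"
  shows "xi1_helix I xi \<longleftrightarrow> Wn_helix I xi v G K"
proof -
  note M = assms(1)[unfolded myller_configuration_def]
  have iv: "is_interval I" and op: "open I" and ne: "I \<noteq> {}" using M by auto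
  have sm: "smooth_on I xi" using M by auto
  have nrm: "\<And>s. s \<in> I \<Longrightarrow> norm (xi s) = 1 \<and> norm (v s) = 1 \<and> xi s \<bullet> v s = 0" using M by auto
  have dxi: "\<And>s. s \<in> I \<Longrightarrow> (xi has_vector_derivative (G s *\<^sub>R myller_mu xi v s + K s *\<^sub>R v s)) (at s)"
    using M by auto
  obtain D where D0: "\<forall>s\<in>I. D 0 s = xi s" and Dd: "\<forall>n. \<forall>s\<in>I. (D n has_vector_derivative D (Suc n) s) (at s)"
    using sm unfolding smooth_on_def by blast
  have Dd': "(D n has_vector_derivative D (Suc n) s) (at s)" if "s \<in> I" for n s
    using Dd that by blast
  have da: "(xi has_vector_derivative D 1 s) (at s)" if sI: "s \<in> I" for s
    using has_vector_derivative_transform_within_open[OF Dd'[OF sI, where n=0] op sI] sI D0 by simp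
  have db: "(D 1 has_vector_derivative D 2 s) (at s)" if sI: "s \<in> I" for s
    using Dd'[OF sI, where n=1] by (simp add: numeral_2_eq_2)
  have cb2: "continuous_on I (D 2)"
  proof (rule continuous_at_imp_continuous_on, intro ballI)
    fix s assume "s \<in> I"
    then show "continuous (at s) (D 2)"
      using Dd'[OF \<open>s \<in> I\<close>, where n=2] by (meson has_vector_derivative_continuous)
  qed
  have bxi: "D 1 s = G s *\<^sub>R myller_mu xi v s + K s *\<^sub>R v s" if sI: "s \<in> I" for s
    using vector_derivative_unique_at[OF da[OF sI] dxi[OF sI]] .
  have aa: "xi s \<bullet> xi s = 1" if sI: "s \<in> I" for s
    using nrm[OF sI] by (simp add: norm_eq_1)
  have xv: "xi s \<bullet> v s = 0" if sI: "s \<in> I" for s using nrm[OF sI] by simp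
  have ab: "xi s \<bullet> D 1 s = 0" if sI: "s \<in> I" for s
    using bxi[OF sI] xv[OF sI] by (simp add: inner_add_right myller_mu_def dot_cross_self)
  have bnz: "D 1 s \<noteq> 0" if sI: "s \<in> I" for s
    using assms(2) sI vector_derivative_at[OF da[OF sI]] by (auto simp: frenet_K1_def)
  have Wu: "W_n_unit xi v G K s = (1 / norm (D 1 s)) *\<^sub>R cross3 (xi s) (D 1 s)" if sI: "s \<in> I" for s
  proof -
    have "W_n xi v G K s = cross3 (xi s) (D 1 s)"
      unfolding W_n_def bxi[OF sI] myller_mu_def by (rule wn_ident[OF aa[OF sI] xv[OF sI]])
    then show ?thesis using norm_cross_orth[OF aa[OF sI] ab[OF sI]] by (simp add: W_n_unit_def)
  qed
  have C: "(\<exists>d::real^3. norm d = 1 \<and> (\<exists>c. \<forall>s\<in>I. xi s \<bullet> d = c)) \<longleftrightarrow>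
         (\<exists>l::real^3. norm l = 1 \<and> (\<exists>c. \<forall>s\<in>I. ((1 / norm (D 1 s)) *\<^sub>R cross3 (xi s) (D 1 s)) \<bullet> l = c))"
    by (rule core[OF iv op ne da db cb2 aa ab bnz])
  have E: "(\<forall>s\<in>I. W_n_unit xi v G K s \<bullet> l = c) \<longleftrightarrow> (\<forall>s\<in>I. ((1 / norm (D 1 s)) *\<^sub>R cross3 (xi s) (D 1 s)) \<bullet> l = c)"
    for l c using Wu by simp
  show ?thesis unfolding xi1_helix_def Wn_helix_def frenet_xi1_def E using C by simp
qed

end
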